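(* Let $V>0$, $G_o>0$, $\ell>0$ be constants and set $\rho=V/G_o$. Consider the system on $\{r>0\}$ $$\dot r = -V\cos\psi,\qquad \dot\psi=\Big[\frac1r-\frac1\rho\exp\!\Big(-\frac r\ell\Big)\Big]V\sin\psi .$$ If $\ell>\rho e$, the system has exactly four equilibria (with $\psi$ taken modulo $2\pi$), namely $(r^{*},\pm\pi/2)$ and $(r^{**},\pm\pi/2)$ with $$r^{*}=-\ell\,W_{-1}\!\Big(-\frac{\rho}{\ell}\Big),\qquad r^{**}=-\ell\,W_{0}\!\Big(-\frac{\rho}{\ell}\Big);$$ the linearization at $(r^{*},\pm\pi/2)$ has a pair of nonzero real eigenvalues of opposite sign (saddle type), while the linearization at $(r^{**},\pm\pi/2)$ has a pair of nonzero purely imaginary eigenvalues (center type). If $\ell<\rho e$, the system has no equilibria.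
   Context: This system models a nonholonomic mobile sensor moving at constant speed $V$ in a radially symmetric signal field $f(r,t)=2e^{-r/\ell}\cos(r-t)$ from a source at the origin, with turning gain proportional to the signal's spectral magnitude, $G=G_o e^{-r/\ell}$. Here $r$ is the distance from the source and $\psi$ is the angle between the direction from the sensor to the source and the sensor's heading. $W_0$ and $W_{-1}$ denote the principal and lower real branches of the Lambert W function on $[-1/e,0)$. *)

theory Defs
  imports "HOL-Analysis.Analysis"
begin

definition LambertW0 :: "real \<Rightarrow> real" where
  "LambertW0 x = (THE w. -1 \<le> w \<and> w * exp w = x)"

definition LambertWm1 :: "real \<Rightarrow> real" where
  "LambertWm1 x = (THE w. w \<le> -1 \<and> w * exp w = x)"

definition rdot :: "real \<Rightarrow> real \<Rightarrow> real \<Rightarrow> real" where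
  "rdot V r \<psi> = - V * cos \<psi>"

definition psidot :: "real \<Rightarrow> real \<Rightarrow> real \<Rightarrow> real \<Rightarrow> real \<Rightarrow> real" where
  "psidot V Go l r \<psi> = (1 / r - (1 / (V / Go)) * exp (- r / l)) * V * sin \<psi>"

text \<open>Equilibria with psi taken modulo 2 pi (representatives in (-pi, pi]).\<close>
definition equilibria :: "real \<Rightarrow> real \<Rightarrow> real \<Rightarrow> (real \<times> real) set" where
  "equilibria V Go l = {(r, \<psi>). r > 0 \<and> - pi < \<psi> \<and> \<psi> \<le> pi \<and>
      rdot V r \<psi> = 0 \<and> psidot V Go l r \<psi> = 0}"

definition jac :: "real \<Rightarrow> real \<Rightarrow> real \<Rightarrow> real \<Rightarrow> real \<Rightarrow> real \<times> real \<times> real \<times> real" where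
  "jac V Go l r \<psi> =
     (deriv (\<lambda>x. rdot V x \<psi>) r, deriv (\<lambda>y. rdot V r y) \<psi>,
      deriv (\<lambda>x. psidot V Go l x \<psi>) r, deriv (\<lambda>y. psidot V Go l r y) \<psi>)"

definition lin_eigenvalues :: "real \<Rightarrow> real \<Rightarrow> real \<Rightarrow> real \<Rightarrow> real \<Rightarrow> complex set" where
  "lin_eigenvalues V Go l r \<psi> =
     (case jac V Go l r \<psi> of (a, b, c, d) \<Rightarrow>
        {z. (of_real a - z) * (of_real d - z) - of_real b * of_real c = 0})"

end

theory Submission
  imports Defs
begin

lemma we_inc:
  fixes a b :: real
  assumes "-1 \<le> a" "a < b"
  shows "a * exp a < b * exp b"
proof (rule DERIV_pos_imp_increasing_open[where f="\<lambda>w. w * exp w"])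
  show "a < b" by fact
  fix x assume "a < x" "x < b"
  then have "x > -1" using assms by simp
  show "\<exists>y. ((\<lambda>w. w * exp w) has_real_derivative y) (at x) \<and> y > 0"
  proof (intro exI conjI)
    show "((\<lambda>w. w * exp w) has_real_derivative (1 + x) * exp x) (at x)"
      by (auto intro!: derivative_eq_intros simp: algebra_simps)
    show "(1 + x) * exp x > 0" using \<open>x > -1\<close> by simp
  qed
next
  show "continuous_on {a..b} (\<lambda>w. w * exp w)" by (intro continuous_intros)
qed

lemma we_dec:
  fixes a b :: real
  assumes "b \<le> -1" "a < b"
  shows "a * exp a > b * exp b"
proof (rule DERIV_neg_imp_decreasing_open[where f="\<lambda>w. w * exp w"])
  show "a < b" by fact
  fix x assume "a < x" "x < b"
  then have "x < -1" using assms by simp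
  show "\<exists>y. ((\<lambda>w. w * exp w) has_real_derivative y) (at x) \<and> y < 0"
  proof (intro exI conjI)
    show "((\<lambda>w. w * exp w) has_real_derivative (1 + x) * exp x) (at x)"
      by (auto intro!: derivative_eq_intros simp: algebra_simps)
    show "(1 + x) * exp x < 0" using \<open>x < -1\<close> by (simp add: mult_less_0_iff)
  qed
next
  show "continuous_on {a..b} (\<lambda>w. w * exp w)" by (intro continuous_intros)
qed

lemma exp_sq_bound:
  fixes t :: real assumes "t \<ge> 0" shows "t^2 / 4 \<le> exp t"
proof -
  have "1 + t/2 \<le> exp (t/2)" by (rule exp_ge_add_one_self)
  then have "t/2 \<le> exp (t/2)" using assms by linarith
  then have "(t/2)^2 \<le> (exp (t/2))^2"
    using assms by (intro power_mono) auto
  also have "(exp (t/2))^2 = exp t" by (simp add: power2_eq_square flip: exp_add)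
  finally show ?thesis by (simp add: power_divide)
qed

lemma W0_props:
  fixes x :: real
  assumes "-1/exp 1 < x" "x < 0"
  shows "-1 < LambertW0 x" "LambertW0 x < 0" "LambertW0 x * exp (LambertW0 x) = x"
    "\<And>w. -1 \<le> w \<Longrightarrow> w * exp w = x \<Longrightarrow> w = LambertW0 x"
proof -
  have "\<exists>w. -1 \<le> w \<and> w \<le> 0 \<and> w * exp w = x"
    apply (rule IVT[where f="\<lambda>w. w * exp w"])
    using assms by (auto simp: exp_minus field_simps intro!: continuous_intros)
  then obtain w where w: "-1 \<le> w" "w * exp w = x" by auto
  have uniq: "\<And>v. -1 \<le> v \<Longrightarrow> v * exp v = x \<Longrightarrow> v = w"
    using we_inc w by (metis linorder_neqE_linordered_idom order_less_irrefl)
  have ex1: "\<exists>!v. -1 \<le> v \<and> v * exp v = x" using w uniq by blast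
  have L: "LambertW0 x = w" unfolding LambertW0_def
    by (rule the1_equality[OF ex1]) (use w in auto)
  show "LambertW0 x * exp (LambertW0 x) = x" using L w by simp
  show "\<And>v. -1 \<le> v \<Longrightarrow> v * exp v = x \<Longrightarrow> v = LambertW0 x" using uniq L by simp
  show "-1 < LambertW0 x"
  proof -
    have "w \<noteq> -1" using w assms by (auto simp: exp_minus field_simps)
    then show ?thesis using L w by simp
  qed
  show "LambertW0 x < 0"
  proof -
    have "w * exp w < 0" using w assms by simp
    then have "w < 0" by (simp add: mult_less_0_iff)
    then show ?thesis using L by simp
  qed
qed

lemma Wm1_props:
  fixes x :: real
  assumes "-1/exp 1 < x" "x < 0"
  shows "LambertWm1 x < -1" "LambertWm1 x * exp (LambertWm1 x) = x"
    "\<And>w. w \<le> -1 \<Longrightarrow> w * exp w = x \<Longrightarrow> w = LambertWm1 x"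
proof -
  define a where "a = min (-1) (4/x)"
  have a1: "a \<le> -1" unfolding a_def by simp
  have a2: "a \<le> 4/x" unfolding a_def by simp
  have "a * exp a \<ge> x"
  proof -
    have "(-a)^2/4 \<le> exp (-a)" using a1 by (intro exp_sq_bound) simp
    then have "a^2 \<le> 4 * exp (-a)" by simp
    hence "a^2 * exp a \<le> 4" by (simp add: exp_minus field_simps)
    moreover have "x * a \<ge> 4" using a2 assms(2)
      by (simp add: field_simps mult.commute)
    ultimately have "a^2 * exp a \<le> x * a" by linarith
    hence "a * (a * exp a) \<le> a * x" by (simp add: power2_eq_square algebra_simps)
    thus ?thesis using a1 by (simp add: mult_le_cancel_left)
  qed
  have "\<exists>w. a \<le> w \<and> w \<le> -1 \<and> w * exp w = x"
    apply (rule IVT2[where f="\<lambda>w. w * exp w"])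
    using assms a1 \<open>a * exp a \<ge> x\<close> by (auto simp: exp_minus field_simps intro!: continuous_intros)
  then obtain w where w: "w \<le> -1" "w * exp w = x" by auto
  have uniq: "\<And>v. v \<le> -1 \<Longrightarrow> v * exp v = x \<Longrightarrow> v = w"
    using we_dec w by (metis linorder_neqE_linordered_idom order_less_irrefl)
  have ex1: "\<exists>!v. v \<le> -1 \<and> v * exp v = x" using w uniq by blast
  have L: "LambertWm1 x = w" unfolding LambertWm1_def
    by (rule the1_equality[OF ex1]) (use w in auto)
  show "LambertWm1 x * exp (LambertWm1 x) = x" using L w by simp
  show "\<And>v. v \<le> -1 \<Longrightarrow> v * exp v = x \<Longrightarrow> v = LambertWm1 x" using uniq L by simp
  show "LambertWm1 x < -1"
  proof -
    have "w \<noteq> -1" using w assms by (auto simp: exp_minus field_simps)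
    then show ?thesis using L w by simp
  qed
qed


lemma jac_eq:
  fixes V Go l r \<psi> :: real
  assumes "r \<noteq> 0" "l \<noteq> 0" "cos \<psi> = 0"
  shows "jac V Go l r \<psi> = (0, V * sin \<psi>,
            (- 1 / r^2 + (Go / V) * exp (- r / l) / l) * V * sin \<psi>, 0)"
proof -
  have d1: "deriv (\<lambda>x. rdot V x \<psi>) r = 0" unfolding rdot_def by simp
  have "((\<lambda>y. rdot V r y) has_real_derivative V * sin \<psi>) (at \<psi>)"
    unfolding rdot_def by (auto intro!: derivative_eq_intros)
  then have d2: "deriv (\<lambda>y. rdot V r y) \<psi> = V * sin \<psi>" by (rule DERIV_imp_deriv)
  have "((\<lambda>x. psidot V Go l x \<psi>) has_real_derivative
          (- 1 / r^2 + (Go / V) * exp (- r / l) / l) * V * sin \<psi>) (at r)"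
    unfolding psidot_def using assms
    by (auto intro!: derivative_eq_intros simp: field_simps power2_eq_square)
  then have d3: "deriv (\<lambda>x. psidot V Go l x \<psi>) r =
          (- 1 / r^2 + (Go / V) * exp (- r / l) / l) * V * sin \<psi>" by (rule DERIV_imp_deriv)
  have "((\<lambda>y. psidot V Go l r y) has_real_derivative
          (1 / r - (1 / (V / Go)) * exp (- r / l)) * V * cos \<psi>) (at \<psi>)"
    unfolding psidot_def by (auto intro!: derivative_eq_intros)
  then have d4: "deriv (\<lambda>y. psidot V Go l r y) \<psi> = 0"
    using assms(3) by (simp add: DERIV_imp_deriv)
  show ?thesis unfolding jac_def d1 d2 d3 d4 by simp
qed

lemma eig_eq:
  fixes V Go l r \<psi> :: real
  assumes "r \<noteq> 0" "l \<noteq> 0" "cos \<psi> = 0"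
  shows "lin_eigenvalues V Go l r \<psi> = {z. z^2 = complex_of_real
     ((V * sin \<psi>) * ((- 1 / r^2 + (Go / V) * exp (- r / l) / l) * V * sin \<psi>))}"
  unfolding lin_eigenvalues_def jac_eq[OF assms]
  by (auto simp: power2_eq_square algebra_simps)

lemma sq_pos:
  fixes k :: real assumes "k > 0"
  shows "{z::complex. z^2 = complex_of_real k} = {complex_of_real (- sqrt k), complex_of_real (sqrt k)}"
proof -
  have e: "complex_of_real k = (complex_of_real (sqrt k))^2"
    using assms by (simp flip: of_real_power)
  show ?thesis unfolding e power2_eq_iff by auto
qed

lemma sq_neg:
  fixes k :: real assumes "k < 0"
  shows "{z::complex. z^2 = complex_of_real k} =
     {\<i> * complex_of_real (sqrt (-k)), - \<i> * complex_of_real (sqrt (-k))}"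
proof -
  have e: "complex_of_real k = (\<i> * complex_of_real (sqrt (-k)))^2"
    using assms by (simp add: power_mult_distrib flip: of_real_power)
  show ?thesis unfolding e power2_eq_iff by auto
qed

lemma cos0_range:
  fixes \<psi> :: real
  assumes "- pi < \<psi>" "\<psi> \<le> pi" "cos \<psi> = 0"
  shows "\<psi> = pi/2 \<or> \<psi> = - pi/2"
proof -
  obtain n :: int where n: "\<psi> = n * pi + pi/2" using assms(3) cos_zero_iff_int2 by blast
  have "0 < (n + 3/2) * pi" using assms(1) n by (simp add: algebra_simps)
  then have a: "n + 3/2 > 0" by (simp add: zero_less_mult_iff)
  have "(n - 1/2) * pi = n * pi + pi/2 - pi" by (simp add: algebra_simps)
  then have "(n - 1/2) * pi \<le> 0" using assms(2) n by linarith
  then have b: "n - 1/2 \<le> 0" using pi_gt_zero by (auto simp add: mult_le_0_iff)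
  from a b have "n = -1 \<or> n = 0" by linarith
  then show ?thesis using n by auto
qed

lemma equil_iff:
  fixes V Go l r \<psi> :: real
  assumes "V > 0" "Go > 0" "l > 0"
  shows "(r, \<psi>) \<in> equilibria V Go l \<longleftrightarrow>
     r > 0 \<and> (\<psi> = pi/2 \<or> \<psi> = - pi/2) \<and> (- r / l) * exp (- r / l) = - (V / Go) / l"
proof -
  have key: "r > 0 \<Longrightarrow> (1 / r - (1 / (V / Go)) * exp (- r / l) = 0 \<longleftrightarrow>
      (- r / l) * exp (- r / l) = - (V / Go) / l)"
    using assms by (auto simp: field_simps)
  show ?thesis
  proof
    assume h: "(r, \<psi>) \<in> equilibria V Go l"
    then have r: "r > 0" and c: "cos \<psi> = 0" and p: "psidot V Go l r \<psi> = 0"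
      and rg: "- pi < \<psi>" "\<psi> \<le> pi"
      using assms by (auto simp: equilibria_def rdot_def)
    have ps: "\<psi> = pi/2 \<or> \<psi> = - pi/2" using cos0_range[OF rg c] .
    moreover have "sin (pi/2) = 1" "sin (- pi/2) = -1" by simp_all
    ultimately have "sin \<psi> \<noteq> 0" by (metis one_neq_zero neg_equal_0_iff_equal)
    then have "1 / r - (1 / (V / Go)) * exp (- r / l) = 0"
      using p assms unfolding psidot_def by simp
    then show "r > 0 \<and> (\<psi> = pi/2 \<or> \<psi> = - pi/2) \<and> (- r / l) * exp (- r / l) = - (V / Go) / l"
      using key r ps by blast
  next
    assume h: "r > 0 \<and> (\<psi> = pi/2 \<or> \<psi> = - pi/2) \<and> (- r / l) * exp (- r / l) = - (V / Go) / l"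
    then have "1 / r - (1 / (V / Go)) * exp (- r / l) = 0" using key by blast
    moreover have "cos \<psi> = 0 \<and> - pi < \<psi> \<and> \<psi> \<le> pi"
    proof -
      have "cos (pi/2) = 0 \<and> - pi < pi/2 \<and> pi/2 \<le> pi" using pi_gt_zero by simp
      moreover have "cos (- pi/2) = 0" by simp
      moreover have "- pi < - pi/2 \<and> - pi/2 \<le> pi" using pi_gt_zero by linarith
      ultimately show ?thesis using h by blast
    qed
    ultimately show "(r, \<psi>) \<in> equilibria V Go l"
      using h unfolding equilibria_def rdot_def psidot_def by simp
  qed
qed


lemma eig_equil:
  fixes V Go l r \<psi> :: real
  assumes "V > 0" "Go > 0" "l > 0" "r > 0"
    and e: "(- r / l) * exp (- r / l) = - (V / Go) / l"
    and ps: "\<psi> = pi/2 \<or> \<psi> = - pi/2"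
  shows "lin_eigenvalues V Go l r \<psi> = {z. z^2 = complex_of_real (V^2 * (r - l) / (r^2 * l))}"
proof -
  have c: "cos \<psi> = 0" and s: "sin \<psi> * sin \<psi> = 1"
  proof -
    have "cos (pi/2) = 0" "cos (- pi/2) = 0" "sin (pi/2) * sin (pi/2) = 1"
      "sin (- pi/2) * sin (- pi/2) = 1" by simp_all
    then show "cos \<psi> = 0" "sin \<psi> * sin \<psi> = 1" using ps by blast+
  qed
  have g: "(Go / V) * exp (- r / l) = 1 / r" using e assms by (auto simp: field_simps)
  have "(V * sin \<psi>) * ((- 1 / r^2 + (Go / V) * exp (- r / l) / l) * V * sin \<psi>)
      = V^2 * (sin \<psi> * sin \<psi>) * (- 1 / r^2 + ((Go / V) * exp (- r / l)) / l)"
    by (simp add: power2_eq_square algebra_simps)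
  also have "\<dots> = V^2 * (r - l) / (r^2 * l)" unfolding s g using assms
    by (simp add: field_simps power2_eq_square)
  finally have k: "(V * sin \<psi>) * ((- 1 / r^2 + (Go / V) * exp (- r / l) / l) * V * sin \<psi>)
      = V^2 * (r - l) / (r^2 * l)" .
  have "lin_eigenvalues V Go l r \<psi> = {z. z^2 = complex_of_real
     ((V * sin \<psi>) * ((- 1 / r^2 + (Go / V) * exp (- r / l) / l) * V * sin \<psi>))}"
    by (rule eig_eq) (use assms c in auto)
  then show ?thesis unfolding k .
qed

theorem mainTheorem2:
  fixes V Go l :: real
  assumes "V > 0" and "Go > 0" and "l > 0"
  defines "\<rho> \<equiv> V / Go"
  shows "(l > \<rho> * exp 1 \<longrightarrow>
           (let rs = - l * LambertWm1 (- \<rho> / l); rss = - l * LambertW0 (- \<rho> / l) in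
              equilibria V Go l = {(rs, pi/2), (rs, - pi/2), (rss, pi/2), (rss, - pi/2)}
            \<and> card (equilibria V Go l) = 4
            \<and> (\<forall>\<psi>\<in>{pi/2, - pi/2}.
                 (\<exists>a b::real. a < 0 \<and> 0 < b \<and>
                    lin_eigenvalues V Go l rs \<psi> = {complex_of_real a, complex_of_real b})
               \<and> (\<exists>\<omega>::real. \<omega> \<noteq> 0 \<and>
                    lin_eigenvalues V Go l rss \<psi> = {\<i> * complex_of_real \<omega>, - \<i> * complex_of_real \<omega>}))))
       \<and> (l < \<rho> * exp 1 \<longrightarrow> equilibria V Go l = {})"
proof -
  have rp: "\<rho> > 0" unfolding \<rho>_def using assms by simp
  have EQ: "\<And>r \<psi>. (r, \<psi>) \<in> equilibria V Go l \<longleftrightarrow>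
     r > 0 \<and> (\<psi> = pi/2 \<or> \<psi> = - pi/2) \<and> (- r / l) * exp (- r / l) = - \<rho> / l"
    using equil_iff[OF assms(1-3)] unfolding \<rho>_def by simp
  have A: "l > \<rho> * exp 1 \<longrightarrow>
           (let rs = - l * LambertWm1 (- \<rho> / l); rss = - l * LambertW0 (- \<rho> / l) in
              equilibria V Go l = {(rs, pi/2), (rs, - pi/2), (rss, pi/2), (rss, - pi/2)}
            \<and> card (equilibria V Go l) = 4
            \<and> (\<forall>\<psi>\<in>{pi/2, - pi/2}.
                 (\<exists>a b::real. a < 0 \<and> 0 < b \<and>
                    lin_eigenvalues V Go l rs \<psi> = {complex_of_real a, complex_of_real b})
               \<and> (\<exists>\<omega>::real. \<omega> \<noteq> 0 \<and>
                    lin_eigenvalues V Go l rss \<psi> = {\<i> * complex_of_real \<omega>, - \<i> * complex_of_real \<omega>})))"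
  proof
    assume hl: "l > \<rho> * exp 1"
    define x where "x = - \<rho> / l"
    have x1: "-1 / exp 1 < x" using hl assms(3) rp unfolding x_def by (simp add: field_simps)
    have x2: "x < 0" using assms(3) rp unfolding x_def by simp
    define rs where "rs = - l * LambertWm1 x"
    define rss where "rss = - l * LambertW0 x"
    note m = Wm1_props[OF x1 x2]
    note z = W0_props[OF x1 x2]
    have "l * (- LambertWm1 x - 1) > 0" using m(1) assms(3) by simp
    then have rs_gt: "rs > l" unfolding rs_def by (simp add: algebra_simps)
    have "l * (- LambertW0 x) > 0" using z(2) assms(3) by (simp add: mult_pos_neg)
    then have rss_pos1: "rss > 0" unfolding rss_def by (simp add: algebra_simps)
    have "l * (1 + LambertW0 x) > 0" using z(1) assms(3) by simp
    then have "rss < l" unfolding rss_def by (simp add: algebra_simps)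
    note rss_pos = rss_pos1 this
    have rs_w: "- rs / l = LambertWm1 x" unfolding rs_def using assms(3) by simp
    have rss_w: "- rss / l = LambertW0 x" unfolding rss_def using assms(3) by simp
    have rs_e: "(- rs / l) * exp (- rs / l) = - \<rho> / l" unfolding rs_w m(2) x_def[symmetric] ..
    have rss_e: "(- rss / l) * exp (- rss / l) = - \<rho> / l" unfolding rss_w z(3) x_def[symmetric] ..
    have rs_pos: "rs > 0" using rs_gt assms(3) by linarith
    have set: "equilibria V Go l = {(rs, pi/2), (rs, - pi/2), (rss, pi/2), (rss, - pi/2)}"
    proof (rule set_eqI)
      fix p :: "real \<times> real"
      obtain r \<psi> where p: "p = (r, \<psi>)" by (cases p)
      show "p \<in> equilibria V Go l \<longleftrightarrow> p \<in> {(rs, pi/2), (rs, - pi/2), (rss, pi/2), (rss, - pi/2)}"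
      proof
        assume "p \<in> equilibria V Go l"
        then have h: "r > 0" "\<psi> = pi/2 \<or> \<psi> = - pi/2" "(- r / l) * exp (- r / l) = x"
          using EQ p x_def by auto
        have "r = rs \<or> r = rss"
        proof (cases "- r / l \<le> -1")
          case True
          then have "- r / l = LambertWm1 x" using m(3) h(3) by blast
          then show ?thesis using rs_w assms(3) by (simp add: field_simps)
        next
          case False
          then have "- r / l = LambertW0 x" using z(4) h(3) by force
          then show ?thesis using rss_w assms(3) by (simp add: field_simps)
        qed
        then show "p \<in> {(rs, pi/2), (rs, - pi/2), (rss, pi/2), (rss, - pi/2)}"
          using h(2) p by auto
      next
        assume "p \<in> {(rs, pi/2), (rs, - pi/2), (rss, pi/2), (rss, - pi/2)}"
        then have "(r = rs \<or> r = rss) \<and> (\<psi> = pi/2 \<or> \<psi> = - pi/2)" using p by auto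
        then show "p \<in> equilibria V Go l" using EQ p rs_e rss_e rs_pos rss_pos by blast
      qed
    qed
    have ne: "rs \<noteq> rss" using rs_gt rss_pos by simp
    have ne2: "pi / 2 \<noteq> - pi / 2" using pi_gt_zero by simp
    have card: "card (equilibria V Go l) = 4" unfolding set using ne ne2 by simp
    have eig: "\<forall>\<psi>\<in>{pi/2, - pi/2}.
                 (\<exists>a b::real. a < 0 \<and> 0 < b \<and>
                    lin_eigenvalues V Go l rs \<psi> = {complex_of_real a, complex_of_real b})
               \<and> (\<exists>\<omega>::real. \<omega> \<noteq> 0 \<and>
                    lin_eigenvalues V Go l rss \<psi> = {\<i> * complex_of_real \<omega>, - \<i> * complex_of_real \<omega>})"
    proof
      fix \<psi> assume "\<psi> \<in> {pi/2, - pi/2}"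
      then have ps: "\<psi> = pi/2 \<or> \<psi> = - pi/2" by blast
      define k1 where "k1 = V^2 * (rs - l) / (rs^2 * l)"
      define k2 where "k2 = V^2 * (rss - l) / (rss^2 * l)"
      have k1: "k1 > 0" unfolding k1_def using assms rs_gt rs_pos by simp
      have k2: "k2 < 0" unfolding k2_def using assms rss_pos
        by (simp add: divide_neg_pos mult_pos_neg)
      have E1: "lin_eigenvalues V Go l rs \<psi> = {z. z^2 = complex_of_real k1}"
        unfolding k1_def by (rule eig_equil[OF assms(1-3) rs_pos _ ps]) (use rs_e \<rho>_def in simp)
      have E2: "lin_eigenvalues V Go l rss \<psi> = {z. z^2 = complex_of_real k2}"
        unfolding k2_def by (rule eig_equil[OF assms(1-3) rss_pos(1) _ ps]) (use rss_e \<rho>_def in simp)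
      show "(\<exists>a b::real. a < 0 \<and> 0 < b \<and>
                    lin_eigenvalues V Go l rs \<psi> = {complex_of_real a, complex_of_real b})
               \<and> (\<exists>\<omega>::real. \<omega> \<noteq> 0 \<and>
                    lin_eigenvalues V Go l rss \<psi> = {\<i> * complex_of_real \<omega>, - \<i> * complex_of_real \<omega>})"
      proof
        show "\<exists>a b::real. a < 0 \<and> 0 < b \<and>
                    lin_eigenvalues V Go l rs \<psi> = {complex_of_real a, complex_of_real b}"
          by (rule exI[of _ "- sqrt k1"], rule exI[of _ "sqrt k1"]) (use k1 in \<open>simp add: E1 sq_pos\<close>)
        show "\<exists>\<omega>::real. \<omega> \<noteq> 0 \<and>
                    lin_eigenvalues V Go l rss \<psi> = {\<i> * complex_of_real \<omega>, - \<i> * complex_of_real \<omega>}"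
          by (rule exI[of _ "sqrt (- k2)"]) (use k2 in \<open>simp add: E2 sq_neg\<close>)
      qed
    qed
    show "let rs = - l * LambertWm1 (- \<rho> / l); rss = - l * LambertW0 (- \<rho> / l) in
              equilibria V Go l = {(rs, pi/2), (rs, - pi/2), (rss, pi/2), (rss, - pi/2)}
            \<and> card (equilibria V Go l) = 4
            \<and> (\<forall>\<psi>\<in>{pi/2, - pi/2}.
                 (\<exists>a b::real. a < 0 \<and> 0 < b \<and>
                    lin_eigenvalues V Go l rs \<psi> = {complex_of_real a, complex_of_real b})
               \<and> (\<exists>\<omega>::real. \<omega> \<noteq> 0 \<and>
                    lin_eigenvalues V Go l rss \<psi> = {\<i> * complex_of_real \<omega>, - \<i> * complex_of_real \<omega>}))"
      unfolding Let_def x_def[symmetric] rs_def[symmetric] rss_def[symmetric]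
      using set card eig by blast
  qed
  have B: "l < \<rho> * exp 1 \<longrightarrow> equilibria V Go l = {}"
  proof
    assume hl: "l < \<rho> * exp 1"
    show "equilibria V Go l = {}"
    proof (rule ccontr)
      assume "equilibria V Go l \<noteq> {}"
      then obtain r \<psi> where "(r, \<psi>) \<in> equilibria V Go l" by auto
      then have h: "r > 0" "(- r / l) * exp (- r / l) = - \<rho> / l" using EQ by auto
      have "(- r / l) * exp (- r / l) \<ge> (-1) * exp (-1)"
      proof (cases "- r / l \<le> -1")
        case True
        show ?thesis
        proof (cases "- r / l = -1")
          case True then show ?thesis by simp
        next
          case False
          with \<open>- r / l \<le> -1\<close> have lt: "- r / l < -1" by linarith
          show ?thesis by (rule less_imp_le[OF we_dec[OF order_refl lt]])
        qed
      next
        case False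
        then show ?thesis using we_inc[of "-1" "- r / l"] by simp
      qed
      then have "- \<rho> / l \<ge> (-1) * exp (-1)" unfolding h(2) .
      moreover have "(-1) * exp (-1) = - 1 / exp (1::real)" by (simp add: exp_minus divide_inverse)
      ultimately have "- \<rho> / l \<ge> - 1 / exp 1" by simp
      then have "\<rho> * exp 1 \<le> l" using assms(3) by (simp add: field_simps)
      then show False using hl by simp
    qed
  qed
  show ?thesis using A B by blast
qed

end
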